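(* Let $L_m$ be the quiver with one vertex and $m\ge0$ loops, and $d\geq0$. Then the set $\hat S(d)$ (for $Q=L_m$) is $$\hat S(d)=\begin{cases}\text{all subsets of }\{1,\ldots,d\},& m=0,\\ \{\emptyset,\{d\},\{d-1,d\},\ldots,\{2,\ldots,d\},\{1,\ldots,d\}\},& m=1,\\ \{\emptyset,\{1,\ldots,d\}\},& m\geq2.\end{cases}$$
   Context: For a quiver $Q$ with vertex set $Q_0$ and arrows $\alpha:i\to j$, and $\mathbf e\in\mathbb NQ_0$: for tuples $\mathbf K=(K_i)$ with $K_i\subset\{1,\dots,e_i\}$, $|\mathbf K|=(|K_i|)_i$; writing $K_i=\{k_{i,1}<\ldots<k_{i,|K_i|}\}$ and for $\mathbf L$ with $L_i\subset\{1,\dots,|K_i|\}$, $\mathrm{ht}(\mathbf K,\mathbf L)=\sum_i\sum_{j\in L_i}(k_{i,j}-j)$. The sets $\hat S(\mathbf e)$ are defined recursively: $\mathbf K$ (with $K_i\subset\{1,\dots,e_i\}$) belongs to $\hat S(\mathbf e)$ iff $\mathrm{ht}(\mathbf K,\mathbf L)\geq\sum_{\alpha:i\to j}|L_i|(e_j-|K_j|)$ for all $\mathbf L\in\hat S(|\mathbf K|)$. For $L_m$ (one vertex, $m$ loops) this reads: $K=\{k_1<\dots<k_{|K|}\}\subset\{1,\dots,d\}$ lies in $\hat S(d)$ iff $\sum_{j\in L}(k_j-j)\geq m|L|(d-|K|)$ for all $L\in\hat S(|K|)$. *)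

theory Defs
  imports Main
begin

text \<open>The quiver L_m: one vertex, m loops. A dimension vector is a natural number d.\<close>

definition ht :: "nat set \<Rightarrow> nat set \<Rightarrow> int" where
  "ht K L = (\<Sum>j\<in>L. int (sorted_list_of_set K ! (j - 1)) - int j)"

text \<open>The full set {1..d} satisfies the defining inequality trivially
  (both sides are 0), so it is admitted directly; every other K has card K < d, so only
  strictly smaller values of prev are consulted.\<close>

definition Shat_step :: "nat \<Rightarrow> nat \<Rightarrow> (nat \<Rightarrow> nat set set) \<Rightarrow> nat set set" where
  "Shat_step m d prev =
     {K. K \<subseteq> {1..d} \<and>
         (card K = d \<or>
          (\<forall>L \<in> prev (card K). ht K L \<ge> int (m * card L * (d - card K))))}"

primrec Shat_table :: "nat \<Rightarrow> nat \<Rightarrow> (nat \<Rightarrow> nat set set)" where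
  "Shat_table m 0 = (\<lambda>n. Shat_step m n (\<lambda>_. {}))"
| "Shat_table m (Suc d) = (Shat_table m d)(Suc d := Shat_step m (Suc d) (Shat_table m d))"

definition Shat :: "nat \<Rightarrow> nat \<Rightarrow> nat set set" where
  "Shat m d = Shat_table m d d"

end

theory Submission
  imports Defs
begin

lemma nth_gap:
  assumes "sorted_wrt (<) (xs::nat list)" "i \<le> j" "j < length xs"
  shows "xs!i + (j-i) \<le> xs!j"
  using assms(2,3)
proof (induction j)
  case 0 then show ?case by simp
next
  case (Suc j)
  show ?case
  proof (cases "i = Suc j")
    case True then show ?thesis by simp
  next
    case False
    then have "i \<le> j" using Suc by simp
    then have "xs!i + (j-i) \<le> xs!j" using Suc by simp
    moreover have "xs!j < xs!Suc j" using Suc.prems assms(1) sorted_wrt_nth_less by fastforce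
    ultimately show ?thesis using \<open>i \<le> j\<close> by linarith
  qed
qed

lemma sl_bounds:
  assumes "K \<subseteq> {1..d}" "i < card K"
  shows "i+1 \<le> sorted_list_of_set K ! i \<and> sorted_list_of_set K ! i + (card K - 1 - i) \<le> d"
proof -
  have fin: "finite K" using assms(1) finite_subset by blast
  define xs where "xs = sorted_list_of_set K"
  have len: "length xs = card K" using fin xs_def by simp
  have st: "sorted_wrt (<) xs" unfolding xs_def by simp
  have set: "set xs = K" using fin xs_def by simp
  have "xs!0 \<in> K" using set len assms(2) nth_mem by fastforce
  then have a: "1 \<le> xs!0" using assms(1) by auto
  have "xs!(card K - 1) \<in> K" using set len assms(2) nth_mem
    by (metis diff_less less_nat_zero_code not_gr_zero zero_less_one)
  then have b: "xs!(card K - 1) \<le> d" using assms(1) by auto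
  have "xs!0 + (i - 0) \<le> xs!i" using nth_gap[OF st, of 0 i] len assms(2) by simp
  moreover have "xs!i + (card K - 1 - i) \<le> xs!(card K - 1)"
    using nth_gap[OF st, of i "card K - 1"] len assms(2) by simp
  ultimately show ?thesis using a b xs_def by simp
qed

lemma term_bounds:
  assumes "K \<subseteq> {1..d}" "j \<in> {1..card K}"
  shows "0 \<le> int (sorted_list_of_set K ! (j - 1)) - int j \<and>
         int (sorted_list_of_set K ! (j - 1)) - int j \<le> int d - int (card K)"
proof -
  have "j - 1 < card K" using assms(2) by auto
  then have h: "j \<le> sorted_list_of_set K ! (j - 1) \<and> sorted_list_of_set K ! (j - 1) + (card K - j) \<le> d"
    using sl_bounds[OF assms(1), of "j-1"] assms(2) by auto
  have "card K \<le> d" using assms(1) by (metis card_atLeastAtMost card_mono diff_Suc_1 finite_atLeastAtMost)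
  then show ?thesis using h assms(2) by auto
qed

lemma table_eq: "n \<le> d \<Longrightarrow> Shat_table m d n = Shat m n"
proof (induction d arbitrary: n)
  case 0 then show ?case by (simp add: Shat_def)
next
  case (Suc d)
  show ?case
  proof (cases "n = Suc d")
    case True then show ?thesis by (simp add: Shat_def)
  next
    case False then show ?thesis using Suc by simp
  qed
qed

lemma card_le: "K \<subseteq> {1..d} \<Longrightarrow> card K \<le> (d::nat)"
  using card_mono[of "{1..d}" K] by simp

lemma mem_Shat:
  "K \<in> Shat m d \<longleftrightarrow> K \<subseteq> {1..d} \<and>
     (card K = d \<or> (\<forall>L \<in> Shat m (card K). ht K L \<ge> int (m * card L * (d - card K))))"
proof (cases d)
  case 0
  then show ?thesis by (auto simp: Shat_def Shat_step_def)
next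
  case (Suc n)
  have e: "Shat m d = Shat_step m (Suc n) (Shat_table m n)" using Suc by (simp add: Shat_def)
  have t: "Shat_table m n (card K) = Shat m (card K)" if "K \<subseteq> {1..d}" "card K \<noteq> d"
  proof -
    have "card K \<le> n" using card_le[OF that(1)] that(2) Suc by simp
    then show ?thesis by (rule table_eq)
  qed
  show ?thesis
  proof
    assume "K \<in> Shat m d"
    then show "K \<subseteq> {1..d} \<and>
     (card K = d \<or> (\<forall>L \<in> Shat m (card K). ht K L \<ge> int (m * card L * (d - card K))))"
      unfolding e Shat_step_def using t Suc by force
  next
    assume "K \<subseteq> {1..d} \<and>
     (card K = d \<or> (\<forall>L \<in> Shat m (card K). ht K L \<ge> int (m * card L * (d - card K))))"
    then show "K \<in> Shat m d"
      unfolding e Shat_step_def using t Suc by force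
  qed
qed

lemma sum_eq_bound:
  fixes f :: "nat \<Rightarrow> int"
  assumes "finite L" "j \<in> L" "\<forall>l\<in>L. f l \<le> B" "int (card L) * B \<le> sum f L"
  shows "f j = B"
proof -
  have a: "sum f L = f j + sum f (L - {j})" by (rule sum.remove[OF assms(1,2)])
  have b: "sum f (L - {j}) \<le> sum (\<lambda>_. B) (L - {j})" using assms(3) by (intro sum_mono) simp
  have c: "sum (\<lambda>_. B) (L - {j}) = int (card L - 1) * B" using assms(1,2) by simp
  have "card L \<noteq> 0" using assms(1,2) by auto
  then have "card L \<ge> 1" by simp
  then have d: "int (card L) * B = int (card L - 1) * B + B" by (simp add: of_nat_diff algebra_simps)
  have "f j \<ge> B" using a b c d assms(4) by linarith
  moreover have "f j \<le> B" using assms(2,3) by blast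
  ultimately show ?thesis by simp
qed


lemma Shat_sub: "K \<in> Shat m d \<Longrightarrow> K \<subseteq> {1..d}"
  using mem_Shat by blast

lemma ht_nonneg:
  assumes "K \<subseteq> {1..d}" "L \<subseteq> {1..card K}"
  shows "0 \<le> ht K L"
  unfolding ht_def
proof (rule sum_nonneg)
  fix j assume "j \<in> L"
  then show "0 \<le> int (sorted_list_of_set K ! (j - 1)) - int j"
    using term_bounds[OF assms(1)] assms(2) by blast
qed

lemma ht_le:
  assumes "K \<subseteq> {1..d}" "L \<subseteq> {1..card K}"
  shows "ht K L \<le> int (card L) * (int d - int (card K))"
proof -
  have "ht K L \<le> (\<Sum>j\<in>L. int d - int (card K))"
    unfolding ht_def
  proof (rule sum_mono)
    fix j assume "j \<in> L"
    then show "int (sorted_list_of_set K ! (j - 1)) - int j \<le> int d - int (card K)"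
      using term_bounds[OF assms(1)] assms(2) by blast
  qed
  then show ?thesis by simp
qed

lemma case0: "Shat 0 d = Pow {1..d}"
proof
  show "Shat 0 d \<subseteq> Pow {1..d}" using Shat_sub by blast
next
  show "Pow {1..d} \<subseteq> Shat 0 d"
  proof
    fix K assume K: "K \<in> Pow {1..d}"
    then have "\<forall>L \<in> Shat 0 (card K). ht K L \<ge> int (0 * card L * (d - card K))"
      using ht_nonneg Shat_sub by auto
    then show "K \<in> Shat 0 d" using mem_Shat K by blast
  qed
qed

lemma case2:
  assumes "m \<ge> 2"
  shows "Shat m d = {{}, {1..d}}"
proof
  show "Shat m d \<subseteq> {{}, {1..d}}"
  proof
    fix K assume K: "K \<in> Shat m d"
    have sub: "K \<subseteq> {1..d}" using K Shat_sub by blast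
    define c where "c = card K"
    have cd: "c \<le> d" using card_le[OF sub] c_def by simp
    show "K \<in> {{}, {1..d}}"
    proof (rule ccontr)
      assume nK: "K \<notin> {{}, {1..d}}"
      have fin: "finite K" using sub finite_subset by blast
      have c0: "c \<noteq> 0" using nK fin c_def by auto
      have cnd: "c \<noteq> d"
      proof
        assume "c = d"
        then have "K = {1..d}" using card_subset_eq[OF _ sub] c_def by simp
        then show False using nK by simp
      qed
      have Lin: "{1..c} \<in> Shat m c" using mem_Shat[of "{1..c}" m c] by simp
      have "ht K {1..c} \<ge> int (m * card {1..c} * (d - c))"
        using mem_Shat[of K m d] K Lin cnd c_def by auto
      moreover have "ht K {1..c} \<le> int (card {1..c}) * (int d - int c)"
        using ht_le[OF sub, of "{1..c}"] c_def by simp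
      ultimately have "int (m * c * (d - c)) \<le> int c * (int d - int c)" by simp
      then have h: "int m * (int c * (int d - int c)) \<le> 1 * (int c * (int d - int c))"
        using cd by (simp add: of_nat_diff mult.assoc)
      have p: "0 < int c * (int d - int c)" using c0 cnd cd by simp
      have "int m \<le> 1" using h p mult_le_cancel_right_pos by blast
      then show False using assms by simp
    qed
  qed
next
  show "{{}, {1..d}} \<subseteq> Shat m d"
  proof -
    have "{} \<in> Shat m d"
    proof -
      have "\<forall>L \<in> Shat m 0. ht {} L \<ge> int (m * card L * (d - 0))"
      proof
        fix L assume "L \<in> Shat m 0"
        then have "L = {}" using Shat_sub[of L m 0] by auto
        then show "ht {} L \<ge> int (m * card L * (d - 0))" by (simp add: ht_def)
      qed
      then show ?thesis using mem_Shat[of "{}" m d] by simp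
    qed
    moreover have "{1..d} \<in> Shat m d" using mem_Shat[of "{1..d}" m d] by simp
    ultimately show ?thesis by simp
  qed
qed


lemma ht_interval:
  assumes "1 \<le> a" "L \<subseteq> {1..card {a..d}}"
  shows "ht {a..d} L = int (card L) * (int d - int (card {a..d}))"
proof -
  have sl: "sorted_list_of_set {a..d} = [a..<Suc d]"
    using sorted_list_of_set_range[of a "Suc d"] atLeastLessThanSuc_atLeastAtMost by simp
  have cK: "card {a..d} = Suc d - a" by simp
  have "ht {a..d} L = (\<Sum>j\<in>L. int d - int (card {a..d}))"
    unfolding ht_def
  proof (rule sum.cong)
    fix j assume j: "j \<in> L"
    then have j1: "1 \<le> j" "j \<le> Suc d - a" using assms(2) cK by auto
    then have "[a..<Suc d] ! (j - 1) = a + (j - 1)" by (intro nth_upt) simp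
    then show "int (sorted_list_of_set {a..d} ! (j - 1)) - int j = int d - int (card {a..d})"
      using sl cK j1 assms(1) by simp
  qed simp
  then show ?thesis by simp
qed

lemma case1: "Shat 1 d = {{i..d} | i. 1 \<le> i \<and> i \<le> d + 1}"
proof (induction d rule: less_induct)
  case (less d)
  show ?case
  proof
    show "Shat 1 d \<subseteq> {{i..d} | i. 1 \<le> i \<and> i \<le> d + 1}"
    proof
      fix K assume K: "K \<in> Shat 1 d"
      have sub: "K \<subseteq> {1..d}" using K Shat_sub by blast
      have fin: "finite K" using sub finite_subset by blast
      define c where "c = card K"
      have cd: "c \<le> d" using card_le[OF sub] c_def by simp
      show "K \<in> {{i..d} | i. 1 \<le> i \<and> i \<le> d + 1}"
      proof (cases "c = d")
        case True
        then have "K = {1..d}" using card_subset_eq[OF _ sub] c_def by simp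
        then show ?thesis by auto
      next
        case False
        then have cl: "c < d" using cd by simp
        define xs where "xs = sorted_list_of_set K"
        have len: "length xs = c" using xs_def c_def fin by simp
        have setx: "set xs = K" using xs_def fin by simp
        have val: "xs ! (j - 1) = d - c + j" if j: "j \<in> {1..c}" for j
        proof -
          have Lin: "{j..c} \<in> Shat 1 c"
          proof -
            have "{j..c} \<in> {{i..c} | i. 1 \<le> i \<and> i \<le> c + 1}" using j by auto
            then show ?thesis using less.IH[OF cl] by simp
          qed
          have all: "\<forall>L\<in>Shat 1 c. ht K L \<ge> int (1 * card L * (d - c))"
            using mem_Shat[of K 1 d] K False c_def by simp
          have ge: "ht K {j..c} \<ge> int (1 * card {j..c} * (d - c))"
            using all Lin by blast
          have "(\<lambda>l. int (xs ! (l - 1)) - int l) j = int d - int c"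
          proof (rule sum_eq_bound[of "{j..c}"])
            show "finite {j..c}" by simp
            show "j \<in> {j..c}" using j by simp
            show "\<forall>l\<in>{j..c}. int (xs ! (l - 1)) - int l \<le> int d - int c"
            proof
              fix l assume "l \<in> {j..c}"
              then have "l \<in> {1..card K}" using j c_def by simp
              then show "int (xs ! (l - 1)) - int l \<le> int d - int c"
                using term_bounds[OF sub] xs_def c_def by blast
            qed
            show "int (card {j..c}) * (int d - int c) \<le> (\<Sum>l\<in>{j..c}. int (xs ! (l - 1)) - int l)"
              using ge cd xs_def by (simp add: ht_def of_nat_diff)
          qed
          then show ?thesis using cd by simp
        qed
        have "xs = [d - c + 1..<d + 1]"
        proof (rule nth_equalityI)
          have "length [d - c + 1..<d + 1] = c" using cd by (simp; presburger)
          then show "length xs = length [d - c + 1..<d + 1]" using len by simp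
          fix i assume "i < length xs"
          then have "i < c" using len by simp
          then have ic: "i < c" .
          have u: "[d - c + 1..<d + 1] ! i = d - c + 1 + i"
            by (rule nth_upt) (use ic cd in arith)
          have v: "xs ! (Suc i - 1) = d - c + Suc i" using val[of "Suc i"] ic by simp
          show "xs ! i = [d - c + 1..<d + 1] ! i" using u v by simp
        qed
        then have "K = set [d - c + 1..<d + 1]" using setx by simp
        then have "K = {d - c + 1..<d + 1}" by (simp only: set_upt)
        moreover have "{d - c + 1..<d + 1} = {d - c + 1..d}" by auto
        ultimately have "K = {d - c + 1..d}" by simp
        moreover have "1 \<le> d - c + 1 \<and> d - c + 1 \<le> d + 1" by simp
        ultimately show ?thesis by blast
      qed
    qed
  next
    show "{{i..d} | i. 1 \<le> i \<and> i \<le> d + 1} \<subseteq> Shat 1 d"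
    proof
      fix K assume "K \<in> {{i..d} | i. 1 \<le> i \<and> i \<le> d + 1}"
      then obtain a where a: "K = {a..d}" "1 \<le> a" by auto
      have sub: "K \<subseteq> {1..d}" using a by auto
      have "\<forall>L \<in> Shat 1 (card K). ht K L \<ge> int (1 * card L * (d - card K))"
      proof
        fix L assume "L \<in> Shat 1 (card K)"
        then have "L \<subseteq> {1..card K}" using Shat_sub by blast
        then have "ht {a..d} L = int (card L) * (int d - int (card {a..d}))"
          using ht_interval[OF a(2)] a(1) by simp
        then have "ht K L = int (card L) * (int d - int (card K))" using a(1) by simp
        then show "ht K L \<ge> int (1 * card L * (d - card K))"
          using card_le[OF sub] by (simp add: of_nat_diff)
      qed
      then show "K \<in> Shat 1 d" using mem_Shat[of K 1 d] sub by simp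
    qed
  qed
qed

theorem mainTheorem10:
  fixes m d :: nat
  shows "(m = 0 \<longrightarrow> Shat m d = Pow {1..d}) \<and>
         (m = 1 \<longrightarrow> Shat m d = {{i..d} | i. 1 \<le> i \<and> i \<le> d + 1}) \<and>
         (m \<ge> 2 \<longrightarrow> Shat m d = {{}, {1..d}})"
proof (intro conjI impI)
  assume "m = 0" then show "Shat m d = Pow {1..d}" using case0 by simp
next
  assume "m = 1" then show "Shat m d = {{i..d} | i. 1 \<le> i \<and> i \<le> d + 1}" using case1 by simp
next
  assume "m \<ge> 2" then show "Shat m d = {{}, {1..d}}" using case2 by simp
qed

end
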